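(* Let $k\ge1$ be an integer, $\mathbf G$ an abelian group, $A,C\subseteq\mathbf G$ finite and $B\subseteq\mathbf G^k$ finite. Then $$|A|\cdot|B+\Delta(C)|\le|B+\Delta(A)|\cdot|A+C|.$$
   Context: $\Delta(S)=\{(s,\dots,s)\in\mathbf G^k:s\in S\}$ for $S\subseteq\mathbf G$; sums of subsets of $\mathbf G^k$ are coordinatewise. *)

theory Defs
  imports "HOL-Analysis.Analysis"
begin

definition sumset :: "'a::ab_group_add set \<Rightarrow> 'a set \<Rightarrow> 'a set" where
  "sumset X Y = {x + y | x y. x \<in> X \<and> y \<in> Y}"

definition diag :: "'a set \<Rightarrow> ('a ^ 'k) set" where
  "diag S = {(\<chi> i. s) | s. s \<in> S}"

end

theory Submission
  imports Defs
begin

abbreviation D :: "'a \<Rightarrow> 'a ^ 'k" where "D s \<equiv> (\<chi> i. s)"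

lemma D_add: "D (x + y) = (D x + D y :: 'a::ab_group_add ^ 'k)"
  by (simp add: vec_eq_iff)

lemma mem_BD: "v \<in> sumset B (diag X) \<longleftrightarrow> (\<exists>b\<in>B. \<exists>x\<in>X. v = b + D x)"
  unfolding sumset_def diag_def by blast

lemma mem_sumset: "v \<in> sumset X Y \<longleftrightarrow> (\<exists>x\<in>X. \<exists>y\<in>Y. v = x + y)"
  unfolding sumset_def by blast

lemma BD_eq: "sumset B (diag X) = (\<lambda>(b,x). b + D x) ` (B \<times> X)"
  unfolding sumset_def diag_def by auto

lemma fin_BD: "finite B \<Longrightarrow> finite X \<Longrightarrow> finite (sumset B (diag X))"
  unfolding BD_eq by auto

lemma sumset_eq: "sumset X Y = (\<lambda>(x,y). x + y) ` (X \<times> Y)"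
  unfolding sumset_def by auto

lemma fin_sumset: "finite X \<Longrightarrow> finite Y \<Longrightarrow> finite (sumset X Y)"
  unfolding sumset_eq by auto

lemma BD_I: "b \<in> B \<Longrightarrow> x \<in> X \<Longrightarrow> b + D x \<in> sumset B (diag X)"
  using mem_BD by blast

lemma sumset_I: "x \<in> X \<Longrightarrow> y \<in> Y \<Longrightarrow> x + y \<in> sumset X Y"
  using mem_sumset by blast

lemma BD_mono: "X \<subseteq> Y \<Longrightarrow> sumset B (diag X) \<subseteq> sumset B (diag Y)"
proof
  fix v assume "X \<subseteq> Y" "v \<in> sumset B (diag X)"
  then obtain b x where "b \<in> B" "x \<in> X" "v = b + D x" unfolding mem_BD by blast
  then show "v \<in> sumset B (diag Y)" using \<open>X \<subseteq> Y\<close> BD_I by blast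
qed

lemma petridis:
  fixes X :: "'a::ab_group_add set" and B :: "('a ^ 'k) set" and K :: real
  assumes fX: "finite X" and Xne: "X \<noteq> {}" and fB: "finite B"
    and eqK: "real (card (sumset B (diag X))) = K * card X"
    and minK: "\<And>Z. Z \<subseteq> X \<Longrightarrow> K * card Z \<le> real (card (sumset B (diag Z)))"
    and fC: "finite C"
  shows "real (card (sumset B (diag (sumset X C)))) \<le> K * card (sumset X C)"
  using fC
proof (induction C rule: finite_induct)
  case empty
  then show ?case by (simp add: sumset_def diag_def)
next
  case (insert c C)
  define Y where "Y = {x\<in>X. \<forall>b\<in>B. b + D (x + c) \<in> sumset B (diag (sumset X C))}"
  have YX: "Y \<subseteq> X" unfolding Y_def by auto
  have fY: "finite Y" using YX fX finite_subset by blast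
  define T where "T = (\<lambda>v::'a^'k. v + D c)"
  have injT: "inj T" unfolding T_def by (rule injI) simp
  define S1 where "S1 = sumset B (diag (sumset X C))"
  define S2 where "S2 = T ` sumset B (diag X) - T ` sumset B (diag Y)"
  have sub: "sumset B (diag (sumset X (insert c C))) \<subseteq> S1 \<union> S2"
  proof
    fix v assume "v \<in> sumset B (diag (sumset X (insert c C)))"
    then obtain b y where b: "b \<in> B" and y: "y \<in> sumset X (insert c C)"
      and v0: "v = b + D y" unfolding mem_BD by blast
    then obtain x z where x: "x \<in> X" and z: "z \<in> insert c C"
      and v: "v = b + D (x + z)" unfolding mem_sumset by blast
    show "v \<in> S1 \<union> S2"
    proof (cases "z \<in> C")
      case True
      then show ?thesis unfolding S1_def using b x v by (simp add: BD_I sumset_I)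
    next
      case False
      then have zc: "z = c" using z by auto
      show ?thesis
      proof (cases "x \<in> Y")
        case True
        then show ?thesis using b v zc unfolding Y_def S1_def by auto
      next
        case xY: False
        show ?thesis
        proof (cases "b + D x \<in> sumset B (diag Y)")
          case True
          then obtain b' y where b': "b' \<in> B" and y: "y \<in> Y" and e: "b + D x = b' + D y"
            unfolding mem_BD by blast
          have "v = b' + D (y + c)" using v zc e by (simp add: D_add algebra_simps)
          then show ?thesis using y b' unfolding Y_def S1_def by auto
        next
          case False
          have "v = T (b + D x)" using v zc by (simp add: T_def D_add algebra_simps)
          moreover have "b + D x \<in> sumset B (diag X)" using b x by (auto simp: mem_BD)
          moreover have "T (b + D x) \<notin> T ` sumset B (diag Y)"
            using False injT by (simp add: inj_image_mem_iff)
          ultimately show ?thesis unfolding S2_def by auto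
        qed
      qed
    qed
  qed
  have fS1: "finite S1" unfolding S1_def using fB fX insert.hyps(1)
    by (simp add: fin_BD fin_sumset)
  have fBX: "finite (sumset B (diag X))" using fB fX by (simp add: fin_BD)
  have fS2: "finite S2" unfolding S2_def using fBX by simp
  have cS2: "card S2 = card (sumset B (diag X)) - card (sumset B (diag Y))"
  proof -
    have s: "T ` sumset B (diag Y) \<subseteq> T ` sumset B (diag X)" using BD_mono[OF YX] by (rule image_mono)
    have f: "finite (T ` sumset B (diag Y))" using fBX BD_mono[OF YX] finite_subset by blast
    have c1: "card (T ` sumset B (diag Y)) = card (sumset B (diag Y))"
      using injT by (simp add: card_image inj_on_def inj_def)
    have c2: "card (T ` sumset B (diag X)) = card (sumset B (diag X))"
      using injT by (simp add: card_image inj_on_def inj_def)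
    show ?thesis unfolding S2_def using card_Diff_subset[OF f s] c1 c2 by simp
  qed
  have cBYle: "card (sumset B (diag Y)) \<le> card (sumset B (diag X))"
    by (simp add: BD_mono YX card_mono fBX)
  have "card (sumset B (diag (sumset X (insert c C)))) \<le> card (S1 \<union> S2)"
    using sub fS1 fS2 by (simp add: card_mono)
  also have "\<dots> \<le> card S1 + card S2" by (rule card_Un_le)
  finally have up: "real (card (sumset B (diag (sumset X (insert c C)))))
     \<le> real (card S1) + real (card (sumset B (diag X))) - real (card (sumset B (diag Y)))"
    using cS2 cBYle by (simp add: of_nat_diff)
  have IH: "real (card S1) \<le> K * card (sumset X C)" using insert.IH unfolding S1_def .
  have KY: "K * card Y \<le> real (card (sumset B (diag Y)))" using minK YX by blast
  have disj: "sumset X C \<inter> (\<lambda>x. x + c) ` (X - Y) = {}"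
  proof (rule ccontr)
    assume "sumset X C \<inter> (\<lambda>x. x + c) ` (X - Y) \<noteq> {}"
    then obtain x where x: "x \<in> X" "x \<notin> Y" and xc: "x + c \<in> sumset X C" by auto
    then obtain x' c' where x': "x' \<in> X" "c' \<in> C" "x + c = x' + c'" unfolding mem_sumset by blast
    have "\<forall>b\<in>B. b + D (x + c) \<in> sumset B (diag (sumset X C))"
    proof
      fix b assume "b \<in> B"
      then have "b + D (x' + c') \<in> sumset B (diag (sumset X C))"
        using x' by (intro BD_I sumset_I)
      then show "b + D (x + c) \<in> sumset B (diag (sumset X C))"
        using x'(3) by simp
    qed
    then have "x \<in> Y" using x unfolding Y_def by auto
    then show False using x by simp
  qed
  have subl: "sumset X C \<union> (\<lambda>x. x + c) ` (X - Y) \<subseteq> sumset X (insert c C)"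
    unfolding sumset_def by blast
  have fXC': "finite (sumset X (insert c C))" using fX insert.hyps(1) by (simp add: fin_sumset)
  have fXC: "finite (sumset X C)" using fX insert.hyps(1) by (simp add: fin_sumset)
  have "card (sumset X C) + card (X - Y) = card (sumset X C \<union> (\<lambda>x. x + c) ` (X - Y))"
    using disj fXC fX by (simp add: card_Un_disjoint card_image inj_on_def)
  also have "\<dots> \<le> card (sumset X (insert c C))" using subl fXC' by (simp add: card_mono)
  finally have low: "real (card (sumset X C)) + real (card X) - real (card Y) \<le> real (card (sumset X (insert c C)))"
    using card_Diff_subset[OF fY YX] card_mono[OF fX YX] by (simp add: of_nat_diff)
  have K0: "K \<ge> 0"
  proof -
    have "card X > 0" using fX Xne by (simp add: card_gt_0_iff)
    moreover have "K * card X \<ge> 0" using eqK[symmetric] by simp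
    ultimately show ?thesis by (simp add: zero_le_mult_iff)
  qed
  have "K * (real (card (sumset X C)) + real (card X) - real (card Y)) \<le> K * card (sumset X (insert c C))"
    using low K0 by (rule mult_left_mono)
  then show ?case using up IH KY eqK by (simp add: algebra_simps)
qed

theorem corollary36:
  fixes A C :: "'a::ab_group_add set" and B :: "('a ^ 'k) set"
  assumes "finite A" and "finite C" and "finite B"
  shows "card A * card (sumset B (diag C)) \<le> card (sumset B (diag A)) * card (sumset A C)"
proof (cases "A = {}")
  case True then show ?thesis by simp
next
  case False
  let ?r = "\<lambda>X. real (card (sumset B (diag X))) / real (card X)"
  define S where "S = {X. X \<subseteq> A \<and> X \<noteq> {}}"
  have fS: "finite S" unfolding S_def using assms(1) by simp
  have AS: "A \<in> S" unfolding S_def using False by simp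
  have "Min (?r ` S) \<in> ?r ` S" using fS AS by (intro Min_in) auto
  then obtain X where XS: "X \<in> S" and Xe: "?r X = Min (?r ` S)" by auto
  have Xmin: "?r X \<le> ?r Z" if "Z \<in> S" for Z using Xe fS that by simp
  have XA: "X \<subseteq> A" and Xne: "X \<noteq> {}" using XS unfolding S_def by auto
  have fX: "finite X" using XA assms(1) finite_subset by blast
  have cX: "card X > 0" using fX Xne by (simp add: card_gt_0_iff)
  define K where "K = ?r X"
  have eqK: "real (card (sumset B (diag X))) = K * card X" using cX unfolding K_def by simp
  have minK: "K * card Z \<le> real (card (sumset B (diag Z)))" if "Z \<subseteq> X" for Z
  proof (cases "Z = {}")
    case True then show ?thesis by simp
  next
    case False
    have fZ: "finite Z" using that fX finite_subset by blast
    have cZ: "card Z > 0" using fZ False by (simp add: card_gt_0_iff)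
    have "Z \<in> S" unfolding S_def using that XA False by auto
    then have "K \<le> ?r Z" using Xmin unfolding K_def by blast
    then show ?thesis using cZ by (simp add: field_simps)
  qed
  have P: "real (card (sumset B (diag (sumset X C)))) \<le> K * card (sumset X C)"
    by (rule petridis[OF fX Xne assms(3) eqK minK assms(2)])
  obtain x0 where x0: "x0 \<in> X" using Xne by auto
  have "card (sumset B (diag C)) \<le> card (sumset B (diag (sumset X C)))"
  proof -
    have "(\<lambda>v. v + D x0) ` sumset B (diag C) \<subseteq> sumset B (diag (sumset X C))"
    proof
      fix w assume "w \<in> (\<lambda>v. v + D x0) ` sumset B (diag C)"
      then obtain u where "u \<in> sumset B (diag C)" "w = u + D x0" by blast
      then obtain b c where "b \<in> B" "c \<in> C" "w = b + D c + D x0" unfolding mem_BD by blast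
      then have "w = b + D (x0 + c)" by (simp add: D_add algebra_simps)
      then show "w \<in> sumset B (diag (sumset X C))" using \<open>b \<in> B\<close> \<open>c \<in> C\<close> x0
        by (simp add: BD_I sumset_I)
    qed
    moreover have "finite (sumset B (diag (sumset X C)))"
      using assms fX by (simp add: fin_BD fin_sumset)
    ultimately have "card ((\<lambda>v. v + D x0) ` sumset B (diag C)) \<le> card (sumset B (diag (sumset X C)))"
      by (simp add: card_mono)
    moreover have "card ((\<lambda>v. v + D x0) ` sumset B (diag C)) = card (sumset B (diag C))"
      by (rule card_image) (simp add: inj_on_def)
    ultimately show ?thesis by simp
  qed
  moreover have "card (sumset X C) \<le> card (sumset A C)"
  proof (rule card_mono)
    show "finite (sumset A C)" using assms by (simp add: fin_sumset)
    show "sumset X C \<subseteq> sumset A C" using XA unfolding sumset_def by blast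
  qed
  moreover have K0: "K \<ge> 0" unfolding K_def by simp
  ultimately have "real (card (sumset B (diag C))) \<le> K * card (sumset A C)"
  proof -
    assume a1: "card (sumset B (diag C)) \<le> card (sumset B (diag (sumset X C)))"
      and a2: "card (sumset X C) \<le> card (sumset A C)" and a3: "K \<ge> 0"
    have "K * card (sumset X C) \<le> K * card (sumset A C)" using a2 a3 by (simp add: mult_left_mono)
    then show ?thesis using a1 P by linarith
  qed
  moreover have "K \<le> ?r A" using Xmin AS unfolding K_def by blast
  moreover have cA: "card A > 0" using assms(1) False by (simp add: card_gt_0_iff)
  ultimately have "real (card (sumset B (diag C))) \<le> ?r A * card (sumset A C)"
    by (meson mult_right_mono of_nat_0_le_iff order_trans)
  then have "real (card A) * real (card (sumset B (diag C))) \<le> real (card (sumset B (diag A))) * card (sumset A C)"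
    using cA by (simp add: field_simps)
  then have "real (card A * card (sumset B (diag C))) \<le> real (card (sumset B (diag A)) * card (sumset A C))"
    by simp
  then show ?thesis by (simp only: of_nat_le_iff)
qed

end
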